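(* Let $n\ge1$, $\phi^{\mathrm{imp}}\in\mathbb R^{n\times n}$ and $g\in\mathbb R^{n\times n}$ be arbitrary, and define $\phi^+,\phi,g^+,g^{\mathrm{imp}}$ by the projection and gradient processing oracles in the context. Then $\phi\in\mathcal S(n)$ and for every $\phi^*\in\mathcal S(n)$, $$\langle g,\phi-\phi^*\rangle\le\langle g^{\mathrm{imp}},\phi^{\mathrm{imp}}-\phi^*\rangle.$$
   Context: $\mathcal S(n)$ is the set of $n\times n$ right stochastic matrices; matrix inner product $\langle x,y\rangle=\sum_{i,j}x_{i,j}y_{i,j}$; subscript $i$ on a matrix denotes its $i$-th row, and $\mathbf 1$ is the all-ones vector. Projection oracle: $\phi^+_{i,j}=\max\{\phi^{\mathrm{imp}}_{i,j},0\}$; then $\phi_i=\phi^+_i/\|\phi^+_i\|_1$ if $\|\phi^+_i\|_1>0$ and $\phi_i=(1/n,\dots,1/n)$ otherwise. Gradient processing oracle: $g^+_i=g_i-\langle g_i,\phi_i\rangle\mathbf 1$ for each row $i$; then $g^{\mathrm{imp}}_{i,j}=g^+_{i,j}$ if $\phi^{\mathrm{imp}}_{i,j}\ge0$ (equivalently $\phi^+_{i,j}=\phi^{\mathrm{imp}}_{i,j}$), and $g^{\mathrm{imp}}_{i,j}=\min\{g^+_{i,j},0\}$ otherwise. *)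

theory Defs
  imports "HOL-Analysis.Analysis"
begin

text \<open>n x n matrices are real^'n^'n (row i is M $ i, entry M $ i $ j);
  n = CARD('n) \<ge> 1 automatically.\<close>

definition right_stochastic :: "real^'n^'n \<Rightarrow> bool" where
  "right_stochastic M \<longleftrightarrow>
     (\<forall>i j. M $ i $ j \<ge> 0) \<and> (\<forall>i. (\<Sum>j\<in>UNIV. M $ i $ j) = 1)"

definition mat_inner :: "real^'n^'n \<Rightarrow> real^'n^'n \<Rightarrow> real" where
  "mat_inner x y = (\<Sum>i\<in>UNIV. \<Sum>j\<in>UNIV. x $ i $ j * y $ i $ j)"

definition phi_plus :: "real^'n^'n \<Rightarrow> real^'n^'n" where
  "phi_plus phi_imp = (\<chi> i j. max (phi_imp $ i $ j) 0)"

definition proj_oracle :: "real^'n^'n \<Rightarrow> real^'n^'n" where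
  "proj_oracle phi_imp =
     (\<chi> i j. let s = (\<Sum>k\<in>UNIV. phi_plus phi_imp $ i $ k) in
        if s > 0 then phi_plus phi_imp $ i $ j / s else 1 / real CARD('n))"

definition g_plus :: "real^'n^'n \<Rightarrow> real^'n^'n \<Rightarrow> real^'n^'n" where
  "g_plus phi_imp g =
     (\<chi> i j. g $ i $ j - (\<Sum>k\<in>UNIV. g $ i $ k * proj_oracle phi_imp $ i $ k))"

definition grad_oracle :: "real^'n^'n \<Rightarrow> real^'n^'n \<Rightarrow> real^'n^'n" where
  "grad_oracle phi_imp g =
     (\<chi> i j. if phi_imp $ i $ j \<ge> 0 then g_plus phi_imp g $ i $ j
             else min (g_plus phi_imp g $ i $ j) 0)"

end

theory Submission
  imports Defs
begin

lemma proj_rs: "right_stochastic (proj_oracle (phi_imp::real^'n^'n))"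
proof -
  have nn: "\<And>i j. phi_plus phi_imp $ i $ j \<ge> 0" by (simp add: phi_plus_def)
  show ?thesis
    unfolding right_stochastic_def
  proof (intro conjI allI)
    fix i j
    show "proj_oracle phi_imp $ i $ j \<ge> 0"
      using nn[of i j] by (simp add: proj_oracle_def Let_def)
  next
    fix i
    define s where "s = (\<Sum>k\<in>UNIV. phi_plus phi_imp $ i $ k)"
    show "(\<Sum>j\<in>UNIV. proj_oracle phi_imp $ i $ j) = 1"
    proof (cases "s > 0")
      case True
      have "(\<Sum>j\<in>UNIV. proj_oracle phi_imp $ i $ j) = (\<Sum>j\<in>UNIV. phi_plus phi_imp $ i $ j / s)"
        using True by (simp add: proj_oracle_def Let_def s_def[symmetric])
      also have "\<dots> = s / s" by (simp add: sum_divide_distrib[symmetric] s_def)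
      finally show ?thesis using True by simp
    next
      case False
      then show ?thesis by (simp add: proj_oracle_def Let_def s_def[symmetric])
    qed
  qed
qed

lemma row_ineq:
  fixes phi_imp g q :: "real^'n^'n" and i :: 'n
  assumes q: "right_stochastic q"
  shows "(\<Sum>j\<in>UNIV. g $ i $ j * (proj_oracle phi_imp - q) $ i $ j)
     \<le> (\<Sum>j\<in>UNIV. grad_oracle phi_imp g $ i $ j * (phi_imp - q) $ i $ j)"
proof -
  define p where "p = proj_oracle phi_imp"
  define c where "c = (\<Sum>k\<in>UNIV. g $ i $ k * p $ i $ k)"
  define gp where "gp = (\<lambda>j. g $ i $ j - c)"
  define gi where "gi = (\<lambda>j. grad_oracle phi_imp g $ i $ j)"
  define x where "x = (\<lambda>j. phi_imp $ i $ j)"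
  define xp where "xp = (\<lambda>j. max (x j) 0)"
  define s where "s = (\<Sum>k\<in>UNIV. xp k)"
  have gpv: "\<And>j. g_plus phi_imp g $ i $ j = gp j"
    by (simp add: g_plus_def gp_def c_def p_def)
  have giv: "\<And>j. gi j = (if x j \<ge> 0 then gp j else min (gp j) 0)"
    by (simp add: gi_def grad_oracle_def gpv x_def)
  have p1: "(\<Sum>j\<in>UNIV. p $ i $ j) = 1" using proj_rs[of phi_imp]
    by (simp add: right_stochastic_def p_def)
  have q1: "(\<Sum>j\<in>UNIV. q $ i $ j) = 1" and q0: "\<And>j. q $ i $ j \<ge> 0"
    using q by (auto simp: right_stochastic_def)
  have gpp: "(\<Sum>j\<in>UNIV. gp j * p $ i $ j) = 0"
    by (simp add: gp_def left_diff_distrib sum_subtractf sum_distrib_left[symmetric] p1 c_def)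
  have xpp: "(\<Sum>j\<in>UNIV. gp j * xp j) = 0"
  proof (cases "s > 0")
    case True
    have "\<And>j. xp j = s * p $ i $ j" using True
      by (simp add: p_def proj_oracle_def Let_def phi_plus_def xp_def x_def s_def)
    then have "(\<Sum>j\<in>UNIV. gp j * xp j) = s * (\<Sum>j\<in>UNIV. gp j * p $ i $ j)"
      by (simp add: sum_distrib_left algebra_simps)
    then show ?thesis using gpp by simp
  next
    case False
    have "s \<ge> 0" unfolding s_def xp_def by (rule sum_nonneg) simp
    with False have "s = 0" by simp
    then have "\<forall>j\<in>UNIV. xp j = 0"
      using sum_nonneg_eq_0_iff[of UNIV xp] by (simp add: xp_def s_def)
    then show ?thesis by simp
  qed
  have b: "(\<Sum>j\<in>UNIV. gp j * xp j) \<le> (\<Sum>j\<in>UNIV. gi j * x j)"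
    apply (rule sum_mono) apply (simp add: giv xp_def)
    by (simp add: mult_nonpos_nonpos)
  have d: "(\<Sum>j\<in>UNIV. gi j * q $ i $ j) \<le> (\<Sum>j\<in>UNIV. gp j * q $ i $ j)"
    apply (rule sum_mono) apply (simp add: giv)
    using q0 by (simp add: mult_right_mono)
  have e: "(\<Sum>j\<in>UNIV. gp j * q $ i $ j) = (\<Sum>j\<in>UNIV. g $ i $ j * q $ i $ j) - c"
    by (simp add: gp_def left_diff_distrib sum_subtractf sum_distrib_left[symmetric] q1)
  have L: "(\<Sum>j\<in>UNIV. g $ i $ j * (proj_oracle phi_imp - q) $ i $ j)
     = c - (\<Sum>j\<in>UNIV. g $ i $ j * q $ i $ j)"
    by (simp add: c_def p_def right_diff_distrib sum_subtractf)
  have R: "(\<Sum>j\<in>UNIV. grad_oracle phi_imp g $ i $ j * (phi_imp - q) $ i $ j)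
     = (\<Sum>j\<in>UNIV. gi j * x j) - (\<Sum>j\<in>UNIV. gi j * q $ i $ j)"
    by (simp add: gi_def x_def right_diff_distrib sum_subtractf)
  show ?thesis unfolding L R using b d e xpp by linarith
qed

theorem lemma6:
  fixes phi_imp g :: "real^'n^'n"
  shows "right_stochastic (proj_oracle phi_imp) \<and>
    (\<forall>phi_star :: real^'n^'n. right_stochastic phi_star \<longrightarrow>
       mat_inner g (proj_oracle phi_imp - phi_star)
         \<le> mat_inner (grad_oracle phi_imp g) (phi_imp - phi_star))"
proof (intro conjI allI impI)
  show "right_stochastic (proj_oracle phi_imp)" by (rule proj_rs)
next
  fix phi_star :: "real^'n^'n"
  assume a: "right_stochastic phi_star"
  show "mat_inner g (proj_oracle phi_imp - phi_star)
         \<le> mat_inner (grad_oracle phi_imp g) (phi_imp - phi_star)"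
    unfolding mat_inner_def
    by (rule sum_mono) (rule row_ineq[OF a])
qed

end
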